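(* Let $A\in\mathbb{R}^{n\times n}$ be Metzler and $J\in\mathbb{R}^{n\times n}$ be nonnegative. The following statements are equivalent: (a) There exists $\lambda\in\mathbb{R}^n_{>0}$ such that $\lambda^\top A<0$ and $\lambda^\top (J-I_n)<0$. (b) $\ker\begin{bmatrix} I_n & -A & -(J-I_n)\end{bmatrix}\cap\mathbb{R}^{3n}_{\ge0}=\{0\}$. Moreover, if one of these statements holds, then the impulsive system is asymptotically stable under arbitrary dwell-time, i.e. for every impulse sequence with $T_k\in(0,\infty)$ for all $k$.
   Context: Consider the linear impulsive system $\dot x(t)=Ax(t)$ for $t\neq t_k$, $x(t_k^+)=Jx(t_k)$, $x(t_0)=x_0$, where $x(t)\in\mathbb{R}^n$, $x(t^+):=\lim_{s\downarrow t}x(s)$ (trajectories are left-continuous), and the impulse times $\{t_k\}_{k\in\mathbb{N}}$ form a strictly increasing sequence with $t_k\to\infty$. The dwell-times are $T_k:=t_{k+1}-t_k$. A square matrix is Metzler if all its off-diagonal entries are nonnegative, and nonnegative if all its entries are nonnegative. Vector inequalities are componentwise; $\mathbb{R}^n_{>0}$ ($\mathbb{R}^n_{\ge0}$) denotes vectors with positive (nonnegative) entries. The system is asymptotically stable under a given dwell-time constraint if its zero solution is globally asymptotically stable for every impulse sequence whose dwell-times satisfy the constraint. *)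

theory Defs
  imports "HOL-Analysis.Analysis"
begin

definition metzler :: "real^'n^'n \<Rightarrow> bool" where
  "metzler A \<longleftrightarrow> (\<forall>i j. i \<noteq> j \<longrightarrow> A $ i $ j \<ge> 0)"

definition nonneg_mat :: "real^'n^'n \<Rightarrow> bool" where
  "nonneg_mat J \<longleftrightarrow> (\<forall>i j. J $ i $ j \<ge> 0)"

text \<open>Admissible impulse sequence under arbitrary dwell-time: strictly increasing
  impulse times t 0 < t 1 < ... with t k tending to infinity (all dwell-times in (0,\<infinity>)).\<close>

definition impulse_seq :: "(nat \<Rightarrow> real) \<Rightarrow> bool" where
  "impulse_seq t \<longleftrightarrow> strict_mono t \<and> filterlim t at_top sequentially"

text \<open>x is a (left-continuous) solution on [t 0, \<infinity>) of
  x' = A x for t not an impulse time, x(t_k^+) = J x(t_k); initial time is t 0.\<close>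

definition impulsive_solution ::
  "real^'n^'n \<Rightarrow> real^'n^'n \<Rightarrow> (nat \<Rightarrow> real) \<Rightarrow> (real \<Rightarrow> real^'n) \<Rightarrow> bool" where
  "impulsive_solution A J t x \<longleftrightarrow>
     (\<forall>k. (\<forall>s \<in> {t k <..< t (Suc k)}. (x has_vector_derivative (A *v x s)) (at s))
        \<and> (x \<longlongrightarrow> x (t (Suc k))) (at_left (t (Suc k)))
        \<and> (x \<longlongrightarrow> J *v x (t k)) (at_right (t k)))"

definition impulsive_GAS :: "real^'n^'n \<Rightarrow> real^'n^'n \<Rightarrow> (nat \<Rightarrow> real) \<Rightarrow> bool" where
  "impulsive_GAS A J t \<longleftrightarrow>
     (\<forall>\<epsilon>>0. \<exists>\<delta>>0. \<forall>x. impulsive_solution A J t x \<and> norm (x (t 0)) < \<delta> \<longrightarrow>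
          (\<forall>s\<ge>t 0. norm (x s) < \<epsilon>))
   \<and> (\<forall>x. impulsive_solution A J t x \<longrightarrow> (x \<longlongrightarrow> 0) at_top)"

end

theory Submission
  imports Defs "HOL-Real_Asymp.Real_Asymp"
begin


lemma sum_image_weights:
  fixes f :: "'a::finite \<Rightarrow> 'b" and G :: "'b \<Rightarrow> 'c::real_vector"
  shows "(\<Sum>i\<in>UNIV. (1 / real (card {j. f j = f i})) *\<^sub>R G (f i)) = (\<Sum>p\<in>range f. G p)"
proof -
  have "(\<Sum>i\<in>UNIV. (1 / real (card {j. f j = f i})) *\<^sub>R G (f i))
     = (\<Sum>p\<in>range f. \<Sum>i\<in>{x\<in>UNIV. f x = p}. (1 / real (card {j. f j = f i})) *\<^sub>R G (f i))"
    by (rule sum.image_gen) simp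
  also have "\<dots> = (\<Sum>p\<in>range f. G p)"
  proof (rule sum.cong[OF refl])
    fix p assume "p \<in> range f"
    then have ne: "{j. f j = p} \<noteq> {}" by auto
    have "(\<Sum>i\<in>{x\<in>UNIV. f x = p}. (1 / real (card {j. f j = f i})) *\<^sub>R G (f i))
        = (\<Sum>i\<in>{j. f j = p}. (1 / real (card {j. f j = p})) *\<^sub>R G p)"
      by (rule sum.cong) auto
    also have "\<dots> = G p"
    proof -
      have "card {j. f j = p} > 0" using ne by (simp add: card_gt_0_iff)
      then show ?thesis using ne by (auto simp add: sum_constant_scaleR)
    qed
    finally show "(\<Sum>i\<in>{x\<in>UNIV. f x = p}. (1 / real (card {j. f j = f i})) *\<^sub>R G (f i)) = G p" .
  qed
  finally show ?thesis .
qed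

lemma sum_Plus_UNIV:
  fixes g :: "('a::finite + 'b::finite) \<Rightarrow> 'c::comm_monoid_add"
  shows "sum g UNIV = (\<Sum>i\<in>UNIV. g (Inl i)) + (\<Sum>i\<in>UNIV. g (Inr i))"
proof -
  have "sum g UNIV = sum g (UNIV <+> UNIV)" by (simp only: UNIV_Plus_UNIV)
  also have "\<dots> = sum (g \<circ> Inl) UNIV + sum (g \<circ> Inr) UNIV" by (rule sum.Plus; simp)
  finally show ?thesis by (simp add: comp_def)
qed

lemma lincomb_axis:
  fixes c :: "'n::finite \<Rightarrow> real"
  shows "(\<Sum>i\<in>UNIV. c i *\<^sub>R (axis i 1 :: real^'n)) = (\<chi> i. c i)"
  by (simp add: vec_eq_iff sum_component axis_def if_distrib cong: if_cong)

lemma lincomb_mat: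
  fixes c :: "'n::finite \<Rightarrow> real" and M :: "real^'n^'n"
  shows "(\<Sum>i\<in>UNIV. c i *\<^sub>R (M *v axis i 1)) = M *v (\<chi> i. c i)"
  by (simp add: vec_eq_iff matrix_vector_mult_def axis_def mult.commute if_distrib sum.delta cong: if_cong)

lemma gordan:
  fixes A J :: "real^'n^'n"
  assumes H: "\<forall>u v w :: real^'n. (\<forall>i. u $ i \<ge> 0) \<and> (\<forall>i. v $ i \<ge> 0) \<and> (\<forall>i. w $ i \<ge> 0)
              \<and> u - A *v v - (J - mat 1) *v w = 0 \<longrightarrow> u = 0 \<and> v = 0 \<and> w = 0"
  shows "\<exists>l::real^'n. (\<forall>i. l $ i > 0) \<and> (\<forall>i. (l v* A) $ i < 0)
              \<and> (\<forall>i. (l v* (J - mat 1)) $ i < 0)"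
proof -
  define f :: "'n + 'n + 'n \<Rightarrow> real^'n" where
    "f = case_sum (\<lambda>i. axis i 1) (case_sum (\<lambda>j. - (A *v axis j 1)) (\<lambda>j. - ((J - mat 1) *v axis j 1)))"
  define P where "P = range f"
  have finP: "finite P" unfolding P_def by simp
  have cvx: "convex (convex hull P)" by (rule convex_convex_hull)
  have cl: "closed (convex hull P)"
    using finite_imp_compact_convex_hull[OF finP] compact_imp_closed by blast
  have n0: "0 \<notin> convex hull P"
  proof
    assume "0 \<in> convex hull P"
    then obtain \<mu> where mu0: "\<forall>x\<in>P. 0 \<le> \<mu> x" and mu1: "sum \<mu> P = 1"
      and mus: "(\<Sum>x\<in>P. \<mu> x *\<^sub>R x) = 0"
      unfolding convex_hull_finite[OF finP] by auto
    define lam where "lam i = \<mu> (f i) / real (card {j. f j = f i})" for i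
    have lam0: "lam i \<ge> 0" for i unfolding lam_def using mu0 P_def by auto
    have laml: "lam i *\<^sub>R f i = (1 / real (card {j. f j = f i})) *\<^sub>R (\<mu> (f i) *\<^sub>R f i)" for i
      unfolding lam_def by simp
    have lamr: "lam i = (1 / real (card {j. f j = f i})) *\<^sub>R (\<mu> (f i))" for i
      unfolding lam_def by simp
    have s1: "sum lam UNIV = 1"
      using sum_image_weights[of f \<mu>] mu1 unfolding lamr P_def by simp
    have s2: "(\<Sum>i\<in>UNIV. lam i *\<^sub>R f i) = 0"
      using sum_image_weights[of f "\<lambda>p. \<mu> p *\<^sub>R p"] mus unfolding laml P_def by simp
    define u :: "real^'n" where "u = (\<chi> i. lam (Inl i))"
    define v :: "real^'n" where "v = (\<chi> i. lam (Inr (Inl i)))"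
    define w :: "real^'n" where "w = (\<chi> i. lam (Inr (Inr i)))"
    have "(\<Sum>i\<in>UNIV. lam i *\<^sub>R f i) = u - A *v v - (J - mat 1) *v w"
      unfolding sum_Plus_UNIV[of "\<lambda>i. lam i *\<^sub>R f i"] sum_Plus_UNIV[of "\<lambda>i. lam (Inr i) *\<^sub>R f (Inr i)"]
      unfolding f_def u_def v_def w_def
      by (simp add: lincomb_axis lincomb_mat[symmetric] sum_negf)
    with s2 have eq: "u - A *v v - (J - mat 1) *v w = 0" by simp
    have "u = 0 \<and> v = 0 \<and> w = 0"
      using H[rule_format, of u v w] eq lam0 unfolding u_def v_def w_def by simp
    then have z1: "\<forall>i. lam (Inl i) = 0" and z2: "\<forall>i. lam (Inr (Inl i)) = 0"
      and z3: "\<forall>i. lam (Inr (Inr i)) = 0"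
      unfolding u_def v_def w_def vec_eq_iff by auto
    have "lam i = 0" for i using z1 z2 z3 by (metis sum.exhaust)
    then show False using s1 by simp
  qed
  obtain a b where ab: "0 < b" "\<forall>x\<in>convex hull P. inner a x > b"
    using separating_hyperplane_closed_0[OF cvx cl n0] by blast
  have fk: "inner a (f k) > 0" for k
    using ab hull_inc[of "f k" P] unfolding P_def by force
  have ax: "inner x (axis i 1) = x $ i" for i :: 'n and x :: "real^'n"
    by (simp add: inner_axis)
  have mx: "inner a (- (M *v axis i 1)) = - ((a v* M) $ i)" for M :: "real^'n^'n" and i
    by (simp only: inner_minus_right dot_lmul_matrix[symmetric] ax)
  show ?thesis
  proof (intro exI conjI allI)
    fix i
    show "a $ i > 0" using fk[of "Inl i"] by (simp only: f_def sum.case ax)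
    show "(a v* A) $ i < 0"
      using fk[of "Inr (Inl i)"] by (simp only: f_def sum.case mx neg_0_less_iff_less)
    show "(a v* (J - mat 1)) $ i < 0"
      using fk[of "Inr (Inr i)"] by (simp only: f_def sum.case mx neg_0_less_iff_less)
  qed
qed



lemma comp_deriv:
  assumes "(y has_vector_derivative y') (at s)"
  shows "((\<lambda>s. y s $ i) has_real_derivative (y' $ i)) (at s)"
  using bounded_linear.has_vector_derivative[OF bounded_linear_vec_nth assms, of i]
  by (simp add: has_real_derivative_iff_has_vector_derivative)

lemma sqrt_deriv:
  assumes "(g has_real_derivative g') (at s)" and e: "\<epsilon> > 0"
  shows "((\<lambda>s. sqrt ((g s)^2 + \<epsilon>^2)) has_real_derivative (g s * g' / sqrt ((g s)^2 + \<epsilon>^2))) (at s)"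
proof -
  have pos: "(g s)^2 + \<epsilon>^2 > 0" using e by (simp add: add_nonneg_pos)
  have d1: "((\<lambda>s. (g s)^2 + \<epsilon>^2) has_real_derivative (2 * g s * g')) (at s)"
    by (auto intro!: derivative_eq_intros assms)
  have d2: "(sqrt has_real_derivative inverse (sqrt ((g s)^2 + \<epsilon>^2)) / 2) (at ((g s)^2 + \<epsilon>^2))"
    by (rule DERIV_real_sqrt[OF pos])
  have "((\<lambda>s. sqrt ((g s)^2 + \<epsilon>^2)) has_real_derivative
      (inverse (sqrt ((g s)^2 + \<epsilon>^2)) / 2) * (2 * g s * g')) (at s)"
    using DERIV_chain'[OF d1 d2] by (simp only:)
  moreover have "(inverse (sqrt ((g s)^2 + \<epsilon>^2)) / 2) * (2 * g s * g') = g s * g' / sqrt ((g s)^2 + \<epsilon>^2)"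
    using pos by (simp add: field_simps)
  ultimately show ?thesis by (simp only:)
qed

lemma key_ineq:
  fixes A :: "real^'n^'n" and l z :: "real^'n"
  assumes mA: "metzler A" and lpos: "\<forall>i. l$i > 0" and e: "\<epsilon> > 0"
  shows "(\<Sum>i\<in>UNIV. l$i * (z$i * (A *v z)$i / sqrt((z$i)^2 + \<epsilon>^2)))
     \<le> (\<Sum>j\<in>UNIV. (l v* A)$j * sqrt((z$j)^2 + \<epsilon>^2)) + (\<Sum>i\<in>UNIV. l$i * \<bar>A$i$i\<bar>) * \<epsilon>"
proof -
  define s where "s j = sqrt((z$j)^2 + \<epsilon>^2)" for j
  have sp: "s j > 0" for j unfolding s_def using e by (simp add: add_nonneg_pos)
  have zs: "\<bar>z$j\<bar> \<le> s j" for j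
    unfolding s_def by (metis real_sqrt_abs real_sqrt_le_mono le_add_same_cancel1 zero_le_power2)
  have es: "\<epsilon> \<le> s j" for j
    unfolding s_def using e
    by (metis real_sqrt_abs real_sqrt_le_mono abs_of_pos le_add_same_cancel2 zero_le_power2)
  have ssq: "(s j)^2 = (z$j)^2 + \<epsilon>^2" for j
    unfolding s_def by (simp add: add_nonneg_nonneg)
  have trm: "A$i$j * (z$i * z$j / s i) \<le> A$i$j * s j + (if j = i then \<bar>A$i$i\<bar> * \<epsilon> else 0)" for i j
  proof (cases "j = i")
    case False
    then have a0: "A$i$j \<ge> 0" using mA unfolding metzler_def by auto
    have "z$i * z$j / s i \<le> \<bar>z$i\<bar> / s i * \<bar>z$j\<bar>"
      by (metis abs_ge_self abs_mult abs_of_pos sp times_divide_eq_left abs_divide mult.commute)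
    also have "\<dots> \<le> 1 * \<bar>z$j\<bar>"
      by (rule mult_right_mono) (use zs sp in \<open>auto simp: divide_le_eq_1\<close>)
    also have "\<dots> \<le> s j" using zs by simp
    finally have "z$i * z$j / s i \<le> s j" .
    then have "A$i$j * (z$i * z$j / s i) \<le> A$i$j * s j" using a0 by (rule mult_left_mono)
    then show ?thesis using False by simp
  next
    case True
    have q: "z$i * z$i / s i = s i - \<epsilon>^2 / s i"
      using sp[of i] ssq[of i] by (simp add: field_simps power2_eq_square)
    have b: "\<bar>A$i$i * (\<epsilon>^2 / s i)\<bar> \<le> \<bar>A$i$i\<bar> * \<epsilon>"
    proof -
      have "\<epsilon>^2 / s i \<le> \<epsilon>" using es[of i] sp[of i] e
        by (simp add: divide_le_eq power2_eq_square mult_left_mono)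
      moreover have "\<epsilon>^2 / s i \<ge> 0" using sp[of i] by simp
      ultimately have "\<bar>\<epsilon>^2 / s i\<bar> \<le> \<epsilon>" by simp
      then show ?thesis unfolding abs_mult by (rule mult_left_mono) simp
    qed
    have "A$i$i * (z$i * z$i / s i) = A$i$i * s i - A$i$i * (\<epsilon>^2 / s i)"
      by (simp add: q right_diff_distrib)
    also have "\<dots> \<le> A$i$i * s i + \<bar>A$i$i\<bar> * \<epsilon>" using b by linarith
    finally show ?thesis using True by simp
  qed
  have row: "z$i * (A *v z)$i / s i \<le> (\<Sum>j\<in>UNIV. A$i$j * s j) + \<bar>A$i$i\<bar> * \<epsilon>" for i
  proof -
    have "z$i * (A *v z)$i / s i = (\<Sum>j\<in>UNIV. A$i$j * (z$i * z$j / s i))"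
      by (simp add: matrix_vector_mult_def sum_distrib_left sum_divide_distrib mult_ac)
    also have "\<dots> \<le> (\<Sum>j\<in>UNIV. A$i$j * s j + (if j = i then \<bar>A$i$i\<bar> * \<epsilon> else 0))"
      by (rule sum_mono) (rule trm)
    also have "\<dots> = (\<Sum>j\<in>UNIV. A$i$j * s j) + \<bar>A$i$i\<bar> * \<epsilon>"
      by (simp add: sum.distrib)
    finally show ?thesis .
  qed
  have "(\<Sum>i\<in>UNIV. l$i * (z$i * (A *v z)$i / s i))
        \<le> (\<Sum>i\<in>UNIV. l$i * ((\<Sum>j\<in>UNIV. A$i$j * s j) + \<bar>A$i$i\<bar> * \<epsilon>))"
  proof (rule sum_mono)
    fix i :: 'n
    have "l$i * (z$i * (A *v z)$i / s i) \<le> l$i * ((\<Sum>j\<in>UNIV. A$i$j * s j) + \<bar>A$i$i\<bar> * \<epsilon>)"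
      using row[of i] lpos by (intro mult_left_mono) (auto simp: less_imp_le)
    then show "l$i * (z$i * (A *v z)$i / s i) \<le> l$i * ((\<Sum>j\<in>UNIV. A$i$j * s j) + \<bar>A$i$i\<bar> * \<epsilon>)" .
  qed
  also have "\<dots> = (\<Sum>j\<in>UNIV. (l v* A)$j * s j) + (\<Sum>i\<in>UNIV. l$i * \<bar>A$i$i\<bar>) * \<epsilon>"
  proof -
    have "(\<Sum>i\<in>UNIV. l$i * ((\<Sum>j\<in>UNIV. A$i$j * s j) + \<bar>A$i$i\<bar> * \<epsilon>))
       = (\<Sum>i\<in>UNIV. \<Sum>j\<in>UNIV. l$i * A$i$j * s j) + (\<Sum>i\<in>UNIV. l$i * \<bar>A$i$i\<bar>) * \<epsilon>"
      by (simp add: distrib_left sum.distrib sum_distrib_left sum_distrib_right mult.assoc)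
    also have "(\<Sum>i\<in>UNIV. \<Sum>j\<in>UNIV. l$i * A$i$j * s j) = (\<Sum>j\<in>UNIV. \<Sum>i\<in>UNIV. l$i * A$i$j * s j)"
      by (rule sum.swap)
    also have "\<dots> = (\<Sum>j\<in>UNIV. (l v* A)$j * s j)"
      by (simp add: vector_matrix_mult_def sum_distrib_right sum_distrib_left mult_ac)
    finally show ?thesis .
  qed
  finally show ?thesis unfolding s_def .
qed

lemma sqrt_bounds:
  fixes z e :: real assumes "e > 0"
  shows "\<bar>z\<bar> \<le> sqrt (z^2 + e^2)" and "sqrt (z^2 + e^2) \<le> \<bar>z\<bar> + e"
proof -
  show "\<bar>z\<bar> \<le> sqrt (z^2 + e^2)"
    by (metis real_sqrt_abs real_sqrt_le_mono le_add_same_cancel1 zero_le_power2)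
  have "z^2 + e^2 \<le> (\<bar>z\<bar> + e)^2" using assms by (simp add: power2_eq_square algebra_simps)
  then have "sqrt (z^2 + e^2) \<le> sqrt ((\<bar>z\<bar> + e)^2)" by (rule real_sqrt_le_mono)
  also have "\<dots> = \<bar>z\<bar> + e" using assms by simp
  finally show "sqrt (z^2 + e^2) \<le> \<bar>z\<bar> + e" .
qed

lemma decay:
  fixes A :: "real^'n^'n" and l :: "real^'n" and y :: "real \<Rightarrow> real^'n"
  assumes mA: "metzler A" and lpos: "\<forall>i. l$i > 0" and c: "c > 0"
    and lc: "\<forall>j. (l v* A)$j \<le> - c * l$j"
    and ab: "a \<le> b" and cont: "continuous_on {a..b} y"
    and der: "\<forall>s\<in>{a<..<b}. (y has_vector_derivative (A *v y s)) (at s)"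
  shows "(\<Sum>i\<in>UNIV. l$i * \<bar>y b $ i\<bar>) \<le> exp (- c * (b - a)) * (\<Sum>i\<in>UNIV. l$i * \<bar>y a $ i\<bar>)"
proof -
  define V where "V z = (\<Sum>i\<in>UNIV. l$i * \<bar>z $ i\<bar>)" for z :: "real^'n"
  define K where "K = (\<Sum>i\<in>UNIV. l$i * \<bar>A$i$i\<bar>)"
  define L where "L = (\<Sum>i\<in>UNIV. l$i)"
  define E where "E = exp (- c * (b - a))"
  have K0: "K \<ge> 0" unfolding K_def using lpos by (intro sum_nonneg) (simp add: less_imp_le)
  have L0: "L \<ge> 0" unfolding L_def using lpos by (intro sum_nonneg) (simp add: less_imp_le)
  have E1: "E \<le> 1" "E > 0" unfolding E_def using c ab by (auto simp: mult_nonneg_nonneg)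
  have main: "V (y b) \<le> E * V (y a) + \<epsilon> * (L + K / c)" if e: "\<epsilon> > 0" for \<epsilon>
  proof -
    define Ve where "Ve s = (\<Sum>i\<in>UNIV. l$i * sqrt ((y s $ i)^2 + \<epsilon>^2))" for s
    define W where "W s = exp (c * s) * (Ve s - K * \<epsilon> / c)" for s
    have "W b \<le> W a"
    proof (rule DERIV_nonpos_imp_decreasing_open[OF ab])
      fix s assume s: "a < s" "s < b"
      have dy: "(y has_vector_derivative (A *v y s)) (at s)" using der s by auto
      define D where "D = (\<Sum>i\<in>UNIV. l$i * (y s $ i * (A *v y s)$i / sqrt ((y s $ i)^2 + \<epsilon>^2)))"
      have dVe: "(Ve has_real_derivative D) (at s)"
        unfolding Ve_def D_def
        by (intro DERIV_sum DERIV_cmult sqrt_deriv[OF comp_deriv[OF dy] e])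
      have dW: "(W has_real_derivative (c * exp (c * s) * (Ve s - K * \<epsilon> / c) + exp (c * s) * D)) (at s)"
        unfolding W_def
        by (auto intro!: derivative_eq_intros dVe)
      have "D \<le> (\<Sum>j\<in>UNIV. (l v* A)$j * sqrt ((y s $ j)^2 + \<epsilon>^2)) + K * \<epsilon>"
        unfolding D_def K_def by (rule key_ineq[OF mA lpos e])
      also have "(\<Sum>j\<in>UNIV. (l v* A)$j * sqrt ((y s $ j)^2 + \<epsilon>^2)) \<le> (\<Sum>j\<in>UNIV. (- c * l$j) * sqrt ((y s $ j)^2 + \<epsilon>^2))"
        by (intro sum_mono mult_right_mono) (use lc in auto)
      also have "\<dots> = - c * Ve s" unfolding Ve_def by (simp add: sum_distrib_left mult_ac)
      finally have Dle: "D \<le> - c * Ve s + K * \<epsilon>" by simp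
      have "c * (Ve s - K * \<epsilon> / c) + D \<le> 0" using Dle c by (simp add: algebra_simps)
      then have "exp (c * s) * (c * (Ve s - K * \<epsilon> / c) + D) \<le> 0"
        by (simp add: mult_nonneg_nonpos)
      moreover have "c * exp (c * s) * (Ve s - K * \<epsilon> / c) + exp (c * s) * D
          = exp (c * s) * (c * (Ve s - K * \<epsilon> / c) + D)"
        by (simp only: distrib_left mult_ac)
      ultimately have "c * exp (c * s) * (Ve s - K * \<epsilon> / c) + exp (c * s) * D \<le> 0"
        by simp
      with dW show "\<exists>y. (W has_real_derivative y) (at s) \<and> y \<le> 0" by blast
    next
      show "continuous_on {a..b} W" unfolding W_def Ve_def
        by (intro continuous_intros cont)
    qed
    then have "exp (c * b) * (Ve b - K * \<epsilon> / c) \<le> exp (c * a) * (Ve a - K * \<epsilon> / c)"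
      unfolding W_def .
    moreover have "exp (c * b) * E = exp (c * a)"
      unfolding E_def mult_exp_exp by (rule arg_cong[where f=exp]) (simp add: algebra_simps)
    ultimately have "exp (c * b) * (Ve b - K * \<epsilon> / c) \<le> exp (c * b) * (E * (Ve a - K * \<epsilon> / c))"
      by (simp only: mult.assoc[symmetric])
    then have "Ve b - K * \<epsilon> / c \<le> E * (Ve a - K * \<epsilon> / c)" by simp
    then have Veb: "Ve b \<le> E * Ve a + (1 - E) * (K * \<epsilon> / c)"
      by (simp only: right_diff_distrib left_diff_distrib mult_1_left)
    have "(1 - E) * (K * \<epsilon> / c) \<le> K * \<epsilon> / c"
    proof (rule mult_left_le_one_le)
      show "0 \<le> K * \<epsilon> / c" using K0 e c by simp
    qed (use E1 in auto)
    have Vb: "V (y b) \<le> Ve b" unfolding V_def Ve_def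
      by (intro sum_mono mult_left_mono sqrt_bounds(1)[OF e]) (use lpos in \<open>auto simp: less_imp_le\<close>)
    have "Ve a \<le> (\<Sum>i\<in>UNIV. l$i * (\<bar>y a $ i\<bar> + \<epsilon>))" unfolding Ve_def
      by (intro sum_mono mult_left_mono sqrt_bounds(2)[OF e]) (use lpos in \<open>auto simp: less_imp_le\<close>)
    also have "\<dots> = V (y a) + \<epsilon> * L" unfolding V_def L_def
      by (simp add: distrib_left sum.distrib sum_distrib_left mult_ac)
    finally have Va: "Ve a \<le> V (y a) + \<epsilon> * L" .
    have "E * Ve a \<le> E * V (y a) + \<epsilon> * L"
    proof -
      have "E * Ve a \<le> E * (V (y a) + \<epsilon> * L)" using Va E1 by (simp add: mult_left_mono)
      also have "\<dots> \<le> E * V (y a) + \<epsilon> * L"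
        using E1 L0 e by (simp add: distrib_left mult_left_le_one_le)
      finally show ?thesis .
    qed
    show ?thesis using Vb Veb \<open>(1 - E) * (K * \<epsilon> / c) \<le> K * \<epsilon> / c\<close> \<open>E * Ve a \<le> E * V (y a) + \<epsilon> * L\<close>
      by (simp add: algebra_simps)
  qed
  have M0: "L + K / c + 1 > 0" using L0 K0 c by (simp add: add_nonneg_pos)
  have "V (y b) \<le> E * V (y a)"
  proof (rule field_le_epsilon)
    fix e :: real assume e: "e > 0"
    define \<epsilon> where "\<epsilon> = e / (L + K / c + 1)"
    have ep: "\<epsilon> > 0" unfolding \<epsilon>_def using e M0 by simp
    have "\<epsilon> * (L + K / c) \<le> \<epsilon> * (L + K / c + 1)" using ep by simp
    also have "\<dots> = e" unfolding \<epsilon>_def using M0 by simp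
    finally show "V (y b) \<le> E * V (y a) + e" using main[OF ep] by simp
  qed
  then show ?thesis unfolding V_def E_def .
qed

lemma VJ_le:
  fixes J :: "real^'n^'n" and l z :: "real^'n"
  assumes nJ: "nonneg_mat J" and lpos: "\<forall>i. l$i > 0" and lJ: "\<forall>i. (l v* (J - mat 1))$i < 0"
  shows "(\<Sum>i\<in>UNIV. l$i * \<bar>(J *v z)$i\<bar>) \<le> (\<Sum>i\<in>UNIV. l$i * \<bar>z$i\<bar>)"
proof -
  have lJj: "(l v* J)$j \<le> l$j" for j
  proof -
    have "(l v* (J - mat 1))$j = (l v* J)$j - (l v* mat 1)$j"
      by (simp only: vector_matrix_mult_def vec_lambda_beta vector_minus_component left_diff_distrib right_diff_distrib sum_subtractf)
    also have "\<dots> = (l v* J)$j - l$j" by simp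
    finally show ?thesis using lJ[rule_format, of j] by simp
  qed
  have "(\<Sum>i\<in>UNIV. l$i * \<bar>(J *v z)$i\<bar>) \<le> (\<Sum>i\<in>UNIV. l$i * (\<Sum>j\<in>UNIV. J$i$j * \<bar>z$j\<bar>))"
  proof (rule sum_mono)
    fix i
    have "\<bar>(J *v z)$i\<bar> \<le> (\<Sum>j\<in>UNIV. \<bar>J$i$j * z$j\<bar>)"
      unfolding matrix_vector_mult_def by (simp only: vec_lambda_beta sum_abs)
    also have "\<dots> = (\<Sum>j\<in>UNIV. J$i$j * \<bar>z$j\<bar>)"
      using nJ unfolding nonneg_mat_def by (simp add: abs_mult)
    finally show "l$i * \<bar>(J *v z)$i\<bar> \<le> l$i * (\<Sum>j\<in>UNIV. J$i$j * \<bar>z$j\<bar>)"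
      using lpos by (simp add: mult_left_mono less_imp_le)
  qed
  also have "\<dots> = (\<Sum>i\<in>UNIV. \<Sum>j\<in>UNIV. l$i * J$i$j * \<bar>z$j\<bar>)"
    by (simp add: sum_distrib_left mult.assoc)
  also have "\<dots> = (\<Sum>j\<in>UNIV. \<Sum>i\<in>UNIV. l$i * J$i$j * \<bar>z$j\<bar>)" by (rule sum.swap)
  also have "\<dots> = (\<Sum>j\<in>UNIV. (l v* J)$j * \<bar>z$j\<bar>)"
    by (simp add: vector_matrix_mult_def sum_distrib_right sum_distrib_left mult_ac)
  also have "\<dots> \<le> (\<Sum>j\<in>UNIV. l$j * \<bar>z$j\<bar>)"
    by (intro sum_mono mult_right_mono lJj) simp
  finally show ?thesis .
qed

lemma stab:
  fixes A J :: "real^'n^'n" and l :: "real^'n"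
  assumes mA: "metzler A" and nJ: "nonneg_mat J" and lpos: "\<forall>i. l$i > 0"
    and lA: "\<forall>i. (l v* A)$i < 0" and lJ: "\<forall>i. (l v* (J - mat 1))$i < 0"
    and ts: "impulse_seq t"
  shows "impulsive_GAS A J t"
proof -
  define V where "V z = (\<Sum>i\<in>UNIV. l$i * \<bar>z$i\<bar>)" for z :: "real^'n"
  define c where "c = Min (range (\<lambda>j. - (l v* A)$j / l$j))"
  have c: "c > 0" unfolding c_def using lA lpos by (auto simp: divide_neg_pos)
  have lc: "\<forall>j. (l v* A)$j \<le> - c * l$j"
  proof
    fix j
    have "c \<le> - (l v* A)$j / l$j" unfolding c_def by (rule Min_le) auto
    then have "c * l$j \<le> - (l v* A)$j" using lpos[rule_format, of j] pos_le_divide_eq[of "l$j" c "- (l v* A)$j"] by (simp only: minus_divide_left)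
    then show "(l v* A)$j \<le> - c * l$j" by simp
  qed
  have smono: "strict_mono t" and tinf: "filterlim t at_top sequentially"
    using ts unfolding impulse_seq_def by auto
  have tSuc: "t k < t (Suc k)" for k using smono by (simp add: strict_mono_Suc_iff)
  have VJ: "V (J *v z) \<le> V z" for z unfolding V_def by (rule VJ_le[OF nJ lpos lJ])
  have V0: "V z \<ge> 0" for z unfolding V_def using lpos by (intro sum_nonneg) (simp add: less_imp_le)
  have key: "V (x s) \<le> exp (- c * (s - t 0)) * V (x (t 0))"
    if sol: "impulsive_solution A J t x" and s: "s \<ge> t 0" for x s
  proof -
    have int: "V (x r) \<le> exp (- c * (r - t k)) * V (x (t k))" if r: "t k < r" "r \<le> t (Suc k)" for k r
    proof -
      have tk: "t k < t (Suc k)" by (rule tSuc)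
      define y where "y = (\<lambda>q. if q = t k then J *v x (t k) else x q)"
      have dx: "\<forall>q\<in>{t k<..<t (Suc k)}. (x has_vector_derivative (A *v x q)) (at q)"
        and lim_l: "(x \<longlongrightarrow> x (t (Suc k))) (at_left (t (Suc k)))"
        and lim_r: "(x \<longlongrightarrow> J *v x (t k)) (at_right (t k))"
        using sol unfolding impulsive_solution_def by auto
      have dY: "(y has_vector_derivative (A *v y q)) (at q)" if q: "q \<in> {t k<..<t (Suc k)}" for q
      proof -
        have "(x has_vector_derivative (A *v x q)) (at q)" using dx q by auto
        then have "(y has_vector_derivative (A *v x q)) (at q)"
          by (rule has_vector_derivative_transform_within_open[OF _ open_greaterThanLessThan q])
             (auto simp: y_def)
        moreover have "y q = x q" using q by (auto simp: y_def)
        ultimately show ?thesis by simp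
      qed
      have cy: "continuous_on {t k..r} y"
        unfolding continuous_on_eq_continuous_within
      proof
        fix q assume q: "q \<in> {t k..r}"
        show "continuous (at q within {t k..r}) y"
        proof (cases "q = t k")
          case True
          have ev: "eventually (\<lambda>p. x p = y p) (at_right (t k))"
            using eventually_at_right_less[of "t k"] by eventually_elim (auto simp: y_def)
          have "(y \<longlongrightarrow> J *v x (t k)) (at_right (t k))"
            using lim_r tendsto_cong[OF ev] by simp
          then have "(y \<longlongrightarrow> y (t k)) (at (t k) within {t k..})"
            by (simp add: at_within_Ici_at_right y_def)
          then have "(y \<longlongrightarrow> y (t k)) (at (t k) within {t k..r})"
            by (rule tendsto_within_subset) auto
          then show ?thesis using True by (simp add: continuous_within)
        next
          case False
          show ?thesis
          proof (cases "q < t (Suc k)")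
            case True
            then have "q \<in> {t k<..<t (Suc k)}" using q False by auto
            from has_vector_derivative_continuous[OF dY[OF this]]
            show ?thesis by (rule continuous_at_imp_continuous_within)
          next
            case qe: False
            then have qe: "q = t (Suc k)" "r = t (Suc k)" using q r by auto
            have ev: "eventually (\<lambda>p. x p = y p) (at_left (t (Suc k)))"
              using eventually_at_left_real[OF tk] by eventually_elim (auto simp: y_def)
            have "(y \<longlongrightarrow> x (t (Suc k))) (at_left (t (Suc k)))"
              using lim_l tendsto_cong[OF ev] by simp
            moreover have "y (t (Suc k)) = x (t (Suc k))" using tk by (simp add: y_def)
            ultimately have "(y \<longlongrightarrow> y (t (Suc k))) (at (t (Suc k)) within {..t (Suc k)})"
              by (simp add: at_within_Iic_at_left)
            then have "(y \<longlongrightarrow> y (t (Suc k))) (at (t (Suc k)) within {t k..r})"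
              by (rule tendsto_within_subset) (auto simp: qe)
            then show ?thesis using qe by (simp add: continuous_within)
          qed
        qed
      qed
      have dy: "\<forall>q\<in>{t k<..<r}. (y has_vector_derivative (A *v y q)) (at q)"
        using dY r by auto
      have "V (y r) \<le> exp (- c * (r - t k)) * V (y (t k))"
        unfolding V_def by (rule decay[OF mA lpos c lc _ cy dy]) (use r in simp)
      moreover have "y r = x r" "y (t k) = J *v x (t k)" using r by (auto simp: y_def)
      ultimately have "V (x r) \<le> exp (- c * (r - t k)) * V (J *v x (t k))" by simp
      also have "\<dots> \<le> exp (- c * (r - t k)) * V (x (t k))"
        by (rule mult_left_mono[OF VJ]) simp
      finally show ?thesis .
    qed
    have tkb: "V (x (t k)) \<le> exp (- c * (t k - t 0)) * V (x (t 0))" for k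
    proof (induction k)
      case 0 then show ?case by simp
    next
      case (Suc k)
      have "V (x (t (Suc k))) \<le> exp (- c * (t (Suc k) - t k)) * V (x (t k))"
        by (rule int) (auto simp: tSuc)
      also have "\<dots> \<le> exp (- c * (t (Suc k) - t k)) * (exp (- c * (t k - t 0)) * V (x (t 0)))"
        by (rule mult_left_mono[OF Suc]) simp
      also have "\<dots> = exp (- c * (t (Suc k) - t k) + - c * (t k - t 0)) * V (x (t 0))"
        by (simp only: exp_add mult.assoc)
      also have "- c * (t (Suc k) - t k) + - c * (t k - t 0) = - c * (t (Suc k) - t 0)"
        by (simp add: algebra_simps)
      finally show ?case .
    qed
    show ?thesis
    proof (cases "s = t 0")
      case True then show ?thesis by simp
    next
      case False
      then have s0: "t 0 < s" using s by simp
      obtain N where N: "\<forall>n\<ge>N. s \<le> t n"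
        using tinf unfolding filterlim_at_top eventually_sequentially by blast
      obtain k where k: "\<forall>i\<le>k. \<not> s \<le> t i" "s \<le> t (Suc k)"
        using ex_least_nat_less[of "\<lambda>n. s \<le> t n" N] N s0 by auto
      have tks: "t k < s" using k(1) by auto
      have "V (x s) \<le> exp (- c * (s - t k)) * V (x (t k))"
        by (rule int) (use tks k in auto)
      also have "\<dots> \<le> exp (- c * (s - t k)) * (exp (- c * (t k - t 0)) * V (x (t 0)))"
        by (rule mult_left_mono[OF tkb]) simp
      also have "\<dots> = exp (- c * (s - t k) + - c * (t k - t 0)) * V (x (t 0))"
        by (simp only: exp_add mult.assoc)
      also have "- c * (s - t k) + - c * (t k - t 0) = - c * (s - t 0)"
        by (simp add: algebra_simps)
      finally show ?thesis .
    qed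
  qed
  define lmin where "lmin = Min (range (\<lambda>i. l$i))"
  define L where "L = (\<Sum>i\<in>UNIV. l$i)"
  have lmin: "lmin > 0" unfolding lmin_def using lpos by auto
  have lminle: "lmin \<le> l$i" for i unfolding lmin_def by (rule Min_le) auto
  have L: "L > 0" unfolding L_def using lpos by (intro sum_pos) auto
  have Vlow: "lmin * norm z \<le> V z" for z
  proof -
    have "lmin * norm z \<le> lmin * (\<Sum>i\<in>UNIV. \<bar>z$i\<bar>)"
      using lmin norm_le_l1_cart[of z] by (simp add: mult_left_mono)
    also have "\<dots> = (\<Sum>i\<in>UNIV. lmin * \<bar>z$i\<bar>)" by (simp add: sum_distrib_left)
    also have "\<dots> \<le> V z" unfolding V_def by (intro sum_mono mult_right_mono lminle) simp
    finally show ?thesis .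
  qed
  have Vup: "V z \<le> L * norm z" for z
  proof -
    have "V z \<le> (\<Sum>i\<in>UNIV. l$i * norm z)" unfolding V_def
      by (intro sum_mono mult_left_mono component_le_norm_cart) (use lpos in \<open>auto simp: less_imp_le\<close>)
    also have "\<dots> = L * norm z" unfolding L_def by (simp add: sum_distrib_right)
    finally show ?thesis .
  qed
  have bound: "norm (x s) \<le> (L / lmin) * exp (- c * (s - t 0)) * norm (x (t 0))"
    if sol: "impulsive_solution A J t x" and s: "s \<ge> t 0" for x s
  proof -
    have "lmin * norm (x s) \<le> exp (- c * (s - t 0)) * V (x (t 0))"
      using Vlow[of "x s"] key[OF sol s] by linarith
    also have "\<dots> \<le> exp (- c * (s - t 0)) * (L * norm (x (t 0)))"
      by (rule mult_left_mono[OF Vup]) simp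
    finally have "lmin * norm (x s) \<le> exp (- c * (s - t 0)) * (L * norm (x (t 0)))" .
    then show ?thesis using lmin by (simp add: field_simps)
  qed
  have e1: "exp (- c * (s - t 0)) \<le> 1" if "s \<ge> t 0" for s
    using that c by (simp add: mult_nonneg_nonneg)
  show ?thesis
    unfolding impulsive_GAS_def
  proof (intro conjI allI impI)
    fix \<epsilon> :: real assume e: "\<epsilon> > 0"
    show "\<exists>\<delta>>0. \<forall>x. impulsive_solution A J t x \<and> norm (x (t 0)) < \<delta> \<longrightarrow> (\<forall>s\<ge>t 0. norm (x s) < \<epsilon>)"
    proof (intro exI conjI allI impI)
      show "\<epsilon> * lmin / L > 0" using e lmin L by simp
      fix x s assume xs: "impulsive_solution A J t x \<and> norm (x (t 0)) < \<epsilon> * lmin / L" and s: "t 0 \<le> s"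
      have "norm (x s) \<le> (L / lmin) * exp (- c * (s - t 0)) * norm (x (t 0))"
        using bound xs s by auto
      also have "\<dots> \<le> (L / lmin) * 1 * norm (x (t 0))"
        by (intro mult_right_mono mult_left_mono e1 s) (use L lmin in auto)
      also have "\<dots> < (L / lmin) * (\<epsilon> * lmin / L)"
        using xs L lmin by (simp only: mult_1_right) (intro mult_strict_left_mono, auto)
      also have "\<dots> = \<epsilon>" using L lmin by simp
      finally show "norm (x s) < \<epsilon>" .
    qed
  next
    fix x assume sol: "impulsive_solution A J t x"
    have ex0: "((\<lambda>s. exp (- c * (s - t 0))) \<longlongrightarrow> 0) at_top"
    proof -
      have "filterlim (\<lambda>s. - c * (s - t 0)) at_bot at_top"
        using c by real_asymp
      then show ?thesis by (rule filterlim_compose[OF exp_at_bot])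
    qed
    have g0: "((\<lambda>s. (L / lmin) * exp (- c * (s - t 0)) * norm (x (t 0))) \<longlongrightarrow> 0) at_top"
      using tendsto_mult[OF tendsto_mult[OF tendsto_const ex0] tendsto_const, of "L / lmin" "norm (x (t 0))"]
      by (simp only: mult_zero_right mult_zero_left)
    have ev: "eventually (\<lambda>s. norm (x s) \<le> (L / lmin) * exp (- c * (s - t 0)) * norm (x (t 0))) at_top"
      by (rule eventually_mono[OF eventually_ge_at_top[of "t 0"]]) (rule bound[OF sol])
    show "(x \<longlongrightarrow> 0) at_top" by (rule Lim_null_comparison[OF ev g0])
  qed
qed


lemma pos_dot_zero:
  fixes p q :: "real^'n"
  assumes "\<forall>i. p$i > 0" "\<forall>i. q$i \<ge> 0" "inner p q = 0"
  shows "q = 0"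
proof -
  have "(\<Sum>i\<in>UNIV. p$i * q$i) = 0" using assms(3) by (simp add: inner_vec_def)
  then have "\<forall>i\<in>UNIV. p$i * q$i = 0"
    using assms(1,2) by (subst (asm) sum_nonneg_eq_0_iff) (auto simp: less_imp_le)
  then show ?thesis using assms(1) by (auto simp: vec_eq_iff) (metis less_irrefl mult_eq_0_iff)
qed

lemma easy_dir:
  fixes A J :: "real^'n^'n"
  assumes lpos: "\<forall>i. l $ i > 0" and lA: "\<forall>i. (l v* A) $ i < 0" and lJ: "\<forall>i. (l v* (J - mat 1)) $ i < 0"
    and u: "\<forall>i. u $ i \<ge> 0" and v: "\<forall>i. v $ i \<ge> 0" and w: "\<forall>i. w $ i \<ge> 0"
    and eq: "u - A *v v - (J - mat 1) *v w = 0"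
  shows "u = 0 \<and> v = 0 \<and> w = 0"
proof -
  have "inner l (u - A *v v - (J - mat 1) *v w) = 0" using eq by simp
  then have e: "inner l u + inner (- (l v* A)) v + inner (- (l v* (J - mat 1))) w = 0"
    by (simp add: inner_diff_right dot_lmul_matrix)
  have nn: "inner p q \<ge> 0" if "\<forall>i. p$i > 0" "\<forall>i. q$i \<ge> 0" for p q :: "real^'n"
    unfolding inner_vec_def using that by (intro sum_nonneg) (simp add: less_imp_le)
  have p1: "\<forall>i. (- (l v* A))$i > 0" using lA by simp
  have p2: "\<forall>i. (- (l v* (J - mat 1)))$i > 0" using lJ by simp
  have a1: "inner l u \<ge> 0" by (rule nn[OF lpos u])
  have a2: "inner (- (l v* A)) v \<ge> 0" by (rule nn[OF p1 v])
  have a3: "inner (- (l v* (J - mat 1))) w \<ge> 0" by (rule nn[OF p2 w])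
  have "inner l u = 0" "inner (- (l v* A)) v = 0" "inner (- (l v* (J - mat 1))) w = 0"
    using e a1 a2 a3 by linarith+
  then show ?thesis
    using pos_dot_zero[OF lpos u] pos_dot_zero[OF p1 v] pos_dot_zero[OF p2 w] by blast
qed

theorem theorem1:
  fixes A J :: "real^'n^'n"
  assumes "metzler A" and "nonneg_mat J"
  shows "((\<exists>l::real^'n. (\<forall>i. l $ i > 0) \<and> (\<forall>i. (l v* A) $ i < 0)
              \<and> (\<forall>i. (l v* (J - mat 1)) $ i < 0))
          \<longleftrightarrow>
          (\<forall>u v w :: real^'n. (\<forall>i. u $ i \<ge> 0) \<and> (\<forall>i. v $ i \<ge> 0) \<and> (\<forall>i. w $ i \<ge> 0)
              \<and> u - A *v v - (J - mat 1) *v w = 0 \<longrightarrow> u = 0 \<and> v = 0 \<and> w = 0))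
       \<and> ((\<exists>l::real^'n. (\<forall>i. l $ i > 0) \<and> (\<forall>i. (l v* A) $ i < 0)
              \<and> (\<forall>i. (l v* (J - mat 1)) $ i < 0))
          \<longrightarrow> (\<forall>t. impulse_seq t \<longrightarrow> impulsive_GAS A J t))"
proof -
  have d1: "(\<exists>l::real^'n. (\<forall>i. l $ i > 0) \<and> (\<forall>i. (l v* A) $ i < 0) \<and> (\<forall>i. (l v* (J - mat 1)) $ i < 0)) \<Longrightarrow> (\<forall>u v w :: real^'n. (\<forall>i. u $ i \<ge> 0) \<and> (\<forall>i. v $ i \<ge> 0) \<and> (\<forall>i. w $ i \<ge> 0)
              \<and> u - A *v v - (J - mat 1) *v w = 0 \<longrightarrow> u = 0 \<and> v = 0 \<and> w = 0)"
  proof -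
    assume "(\<exists>l::real^'n. (\<forall>i. l $ i > 0) \<and> (\<forall>i. (l v* A) $ i < 0) \<and> (\<forall>i. (l v* (J - mat 1)) $ i < 0))"
    then obtain l :: "real^'n" where l: "\<forall>i. l $ i > 0" "\<forall>i. (l v* A) $ i < 0" "\<forall>i. (l v* (J - mat 1)) $ i < 0"
      by blast
    show "(\<forall>u v w :: real^'n. (\<forall>i. u $ i \<ge> 0) \<and> (\<forall>i. v $ i \<ge> 0) \<and> (\<forall>i. w $ i \<ge> 0)
              \<and> u - A *v v - (J - mat 1) *v w = 0 \<longrightarrow> u = 0 \<and> v = 0 \<and> w = 0)" using easy_dir[OF l] by blast
  qed
  have d2: "(\<forall>u v w :: real^'n. (\<forall>i. u $ i \<ge> 0) \<and> (\<forall>i. v $ i \<ge> 0) \<and> (\<forall>i. w $ i \<ge> 0)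
              \<and> u - A *v v - (J - mat 1) *v w = 0 \<longrightarrow> u = 0 \<and> v = 0 \<and> w = 0) \<Longrightarrow> (\<exists>l::real^'n. (\<forall>i. l $ i > 0) \<and> (\<forall>i. (l v* A) $ i < 0) \<and> (\<forall>i. (l v* (J - mat 1)) $ i < 0))" by (rule gordan)
  have d3: "(\<exists>l::real^'n. (\<forall>i. l $ i > 0) \<and> (\<forall>i. (l v* A) $ i < 0) \<and> (\<forall>i. (l v* (J - mat 1)) $ i < 0)) \<longrightarrow> (\<forall>t. impulse_seq t \<longrightarrow> impulsive_GAS A J t)"
  proof (intro impI allI)
    fix t
    assume "(\<exists>l::real^'n. (\<forall>i. l $ i > 0) \<and> (\<forall>i. (l v* A) $ i < 0) \<and> (\<forall>i. (l v* (J - mat 1)) $ i < 0))"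
    then obtain l :: "real^'n" where l: "\<forall>i. l $ i > 0" "\<forall>i. (l v* A) $ i < 0" "\<forall>i. (l v* (J - mat 1)) $ i < 0"
      by blast
    assume "impulse_seq t"
    then show "impulsive_GAS A J t" by (rule stab[OF assms l])
  qed
  show ?thesis using d1 d2 d3 by blast
qed

end
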